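(* Let $s$ be a positive integer and $P(z)=1+\sum_{n=1}^s a_nz^n$ with real coefficients $a_n$. Let $r>0$ and suppose $P^{(k)}(-r)\ge 0$ for all $k=0,1,\dots,s$. Then for every $1\le n\le s$, \[ 0\le a_n\le \frac{\binom{s}{n}}{r^n}. \] Moreover, if $a_n=\binom{s}{n}/r^n$ for at least one $n$ with $1\le n\le s$, then $P(z)=\left(1+\frac{z}{r}\right)^s$. *)

theory Defs
  imports "HOL-Computational_Algebra.Polynomial"
begin

end

theory Submission
  imports Defs
begin

lemma choose_le_Suc: "(k choose n) \<le> (Suc k choose n)"
  by (cases n) simp_all

lemma choose_mono_up: "k \<le> s \<Longrightarrow> (k choose n) \<le> (s choose n)"
proof (induction s rule: dec_induct)
  case base then show ?case by simp
next
  case (step m) then show ?case using choose_le_Suc[of m n] by linarith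
qed

lemma choose_strict: assumes "k < s" "1 \<le> n" "n \<le> s" shows "(k choose n) < (s choose n)"
proof -
  obtain t where t: "s = Suc t" using assms by (cases s) auto
  obtain m where m: "n = Suc m" using assms by (cases n) auto
  have "(k choose n) \<le> (t choose n)" using assms t by (intro choose_mono_up) auto
  moreover have "(t choose m) > 0" using assms t m by simp
  ultimately show ?thesis unfolding t m binomial_Suc_Suc by linarith
qed

lemma coeff_lin_pow:
  fixes r :: real assumes "r \<noteq> 0"
  shows "coeff ([:r,1:] ^ k) n = real (k choose n) * r ^ k / r ^ n"
proof (induction k arbitrary: n)
  case 0 then show ?case by (cases n) auto
next
  case (Suc k)
  show ?case
  proof (cases n)
    case 0 then show ?thesis by (simp add: coeff_0_power)
  next
    case (Suc m)
    have "[:r,1:] ^ Suc k = smult r ([:r,1:]^k) + pCons 0 ([:r,1:]^k)"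
      by (simp add: algebra_simps)
    then have "coeff ([:r,1:] ^ Suc k) n = r * coeff ([:r,1:]^k) (Suc m) + coeff ([:r,1:]^k) m"
      using Suc by simp
    also have "\<dots> = r * (real (k choose Suc m) * r ^ k / r ^ Suc m) + real (k choose m) * r ^ k / r ^ m"
      using Suc.IH by simp
    also have "\<dots> = real (Suc k choose n) * r ^ Suc k / r ^ n"
      using Suc assms by (simp add: field_simps)
    finally show ?thesis .
  qed
qed

lemma pcompose_power: "pcompose (p ^ k) q = (pcompose p q) ^ k"
  by (induction k) (simp_all add: pcompose_1 pcompose_mult)

lemma higher_pderiv_pcompose_lin:
  fixes P :: "real poly"
  shows "(pderiv ^^ k) (pcompose P [:c,1:]) = pcompose ((pderiv ^^ k) P) [:c,1:]"
proof (induction k)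
  case 0 then show ?case by simp
next
  case (Suc k)
  have d: "pderiv [:c, 1::real:] = 1" by (simp add: pderiv_pCons)
  show ?case using Suc by (simp add: pderiv_pcompose d)
qed

theorem mainTheorem5:
  fixes s :: nat and a :: "nat \<Rightarrow> real" and r :: real and P :: "real poly"
  assumes hs: "s \<ge> 1"
    and hP: "P = 1 + (\<Sum>n=1..s. monom (a n) n)"
    and hr: "r > 0"
    and hder: "\<forall>k\<le>s. poly ((pderiv ^^ k) P) (- r) \<ge> 0"
  shows "(\<forall>n\<in>{1..s}. 0 \<le> a n \<and> a n \<le> real (s choose n) / r ^ n)
    \<and> ((\<exists>n\<in>{1..s}. a n = real (s choose n) / r ^ n)
         \<longrightarrow> P = [:1, 1 / r:] ^ s)"
proof -
  define Q where "Q = pcompose P [:-r,1:]"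
  define b where "b k = coeff Q k" for k
  have cP: "coeff P j = (if j = 0 then 1 else if j \<le> s then a j else 0)" for j
  proof -
    have "coeff P j = coeff 1 j + (\<Sum>n=1..s. (if n = j then a n else 0))"
      unfolding hP by (simp add: coeff_sum)
    also have "(\<Sum>n=1..s. (if n = j then a n else 0)) = (if 1 \<le> j \<and> j \<le> s then a j else 0)"
      by (simp add: sum.delta)
    finally show ?thesis by (cases j) auto
  qed
  have degP: "degree P \<le> s"
    by (rule degree_le) (simp add: cP)
  have degQ: "degree Q \<le> s" unfolding Q_def using degP by (simp add: degree_pcompose)
  have bnn: "b k \<ge> 0" if "k \<le> s" for k
  proof -
    have "poly ((pderiv ^^ k) P) (-r) = poly ((pderiv ^^ k) Q) 0"
      unfolding Q_def higher_pderiv_pcompose_lin by (simp add: poly_pcompose)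
    also have "\<dots> = fact k * b k"
      by (simp add: poly_0_coeff_0 coeff_higher_pderiv b_def pochhammer_fact)
    finally have "fact k * b k \<ge> 0" using hder[rule_format, OF that] by simp
    moreover have "fact k > (0::real)" by simp
    ultimately show ?thesis by (simp add: zero_le_mult_iff)
  qed
  have PQ: "P = pcompose Q [:r,1:]"
    unfolding Q_def pcompose_assoc[symmetric] by (simp add: pcompose_pCons)
  have Qsum: "Q = (\<Sum>k\<le>s. monom (b k) k)"
    unfolding b_def using poly_as_sum_of_monoms'[OF degQ] by simp
  have Pform: "P = (\<Sum>k\<le>s. smult (b k) ([:r,1:] ^ k))"
    unfolding PQ by (subst Qsum) (simp add: pcompose_sum monom_altdef pcompose_smult pcompose_power pcompose_pCons)
  have rne: "r \<noteq> 0" using hr by simp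
  have cPn: "coeff P n = (\<Sum>k\<le>s. b k * r ^ k * real (k choose n)) / r ^ n" for n
    by (subst Pform) (simp add: coeff_sum coeff_lin_pow[OF rne] sum_divide_distrib mult_ac)
  have sum1: "(\<Sum>k\<le>s. b k * r ^ k) = 1"
    using cPn[of 0] cP[of 0] by simp
  have an: "a n = (\<Sum>k\<le>s. b k * r ^ k * real (k choose n)) / r ^ n" if "n \<in> {1..s}" for n
    using cPn[of n] cP[of n] that by simp
  have t1: "\<forall>n\<in>{1..s}. 0 \<le> a n \<and> a n \<le> real (s choose n) / r ^ n"
  proof
    fix n assume n: "n \<in> {1..s}"
    have "0 \<le> (\<Sum>k\<le>s. b k * r ^ k * real (k choose n))"
      using bnn hr by (intro sum_nonneg) simp
    moreover have "(\<Sum>k\<le>s. b k * r ^ k * real (k choose n)) \<le> (\<Sum>k\<le>s. b k * r ^ k * real (s choose n))"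
      using bnn hr choose_mono_up by (intro sum_mono mult_left_mono) auto
    moreover have "(\<Sum>k\<le>s. b k * r ^ k * real (s choose n)) = real (s choose n)"
      using sum1 by (simp add: sum_distrib_right[symmetric])
    ultimately show "0 \<le> a n \<and> a n \<le> real (s choose n) / r ^ n"
      using an[OF n] hr by (simp add: divide_right_mono)
  qed
  have t2: "P = [:1, 1 / r:] ^ s" if ex: "\<exists>n\<in>{1..s}. a n = real (s choose n) / r ^ n"
  proof -
    obtain n where n: "n \<in> {1..s}" "a n = real (s choose n) / r ^ n" using ex by blast
    have "(\<Sum>k\<le>s. b k * r ^ k * real (k choose n)) = (\<Sum>k\<le>s. b k * r ^ k * real (s choose n))"
    proof -
      have "(\<Sum>k\<le>s. b k * r ^ k * real (k choose n)) / r ^ n = real (s choose n) / r ^ n"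
        using n an[OF n(1)] by simp
      then have "(\<Sum>k\<le>s. b k * r ^ k * real (k choose n)) = real (s choose n)"
        using hr by simp
      also have "\<dots> = (\<Sum>k\<le>s. b k * r ^ k) * real (s choose n)" using sum1 by simp
      finally show ?thesis by (simp only: sum_distrib_right)
    qed
    then have "(\<Sum>k\<le>s. b k * r ^ k * (real (s choose n) - real (k choose n))) = 0"
      by (simp add: right_diff_distrib sum_subtractf)
    moreover have nn: "\<forall>k\<in>{..s}. 0 \<le> b k * r ^ k * (real (s choose n) - real (k choose n))"
    proof
      fix k assume k: "k \<in> {..s}"
      then have "(k choose n) \<le> (s choose n)" using choose_mono_up by simp
      then have "0 \<le> real (s choose n) - real (k choose n)" by simp
      moreover have "0 \<le> b k * r ^ k" using bnn[of k] k hr by simp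
      ultimately show "0 \<le> b k * r ^ k * (real (s choose n) - real (k choose n))"
        by (rule mult_nonneg_nonneg[rotated])
    qed
    ultimately have z: "\<forall>k\<in>{..s}. b k * r ^ k * (real (s choose n) - real (k choose n)) = 0"
      using sum_nonneg_eq_0_iff[of "{..s}" "\<lambda>k. b k * r ^ k * (real (s choose n) - real (k choose n))"]
      by simp
    have bz: "b k = 0" if "k < s" for k
    proof -
      have "real (k choose n) < real (s choose n)" using choose_strict[OF that] n by auto
      then show ?thesis using z that hr by auto
    qed
    have ins: "{..s} = insert s {..<s}" by auto
    have Ps: "P = smult (b s) ([:r,1:] ^ s)"
    proof -
      have "P = (\<Sum>k\<in>insert s {..<s}. smult (b k) ([:r,1:] ^ k))"
        using Pform ins by simp
      also have "\<dots> = smult (b s) ([:r,1:] ^ s)" using bz by simp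
      finally show ?thesis .
    qed
    have "(\<Sum>k\<in>insert s {..<s}. b k * r ^ k) = 1"
      using sum1 ins by simp
    then have bs: "b s = 1 / r ^ s" using bz hr by (simp add: field_simps)
    have eq: "[:1, 1 / r:] = smult (1/r) [:r,1:]" using hr by simp
    have "[:1, 1 / r:] ^ s = smult ((1/r)^s) ([:r,1:] ^ s)" unfolding eq by (simp only: smult_power)
    then show ?thesis using Ps bs by (simp add: power_one_over)
  qed
  show ?thesis using t1 t2 by blast
qed

end
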